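(* Let $T$ be a tree on at least three vertices and let $S \subseteq V(T)$. Then $S$ is a minimal fort of $T$ if and only if both of the following hold: (I) $S$ contains at least one leaf of $T$; and (II) for every leaf $\ell \in S$, every edge $\{a,b\}$ of $T$ with $a$ closer to $\ell$ than $b$ (possibly $a=\ell$, and possibly $b$ is a leaf) satisfies: (i) if $a, b \notin S$, then $N(b) \cap S = \emptyset$; (ii) if $a \notin S$ and $b \in S$, then $|N(b) \cap S| \le 1$; (iii) if $a \in S$ and $b \notin S$, then $|(N(b)\cap S)\setminus\{a\}| = 1$; (iv) if $a, b \in S$, then $|(N(b)\cap S)\setminus\{a\}| = 0$.
   Context: $N(b)$ is the set of neighbors of $b$. Distances are graph distances in $T$. A fort of a graph $G$ is a nonempty set $F\subseteq V(G)$ such that every vertex outside $F$ is adjacent to either zero or at least two vertices of $F$; it is minimal if no proper subset is a fort. *)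

theory Defs
  imports Main
begin

definition nbrs :: "('a \<Rightarrow> 'a \<Rightarrow> bool) \<Rightarrow> 'a \<Rightarrow> 'a set" where
  "nbrs E v = {u. E v u}"

definition is_walk :: "'a set \<Rightarrow> ('a \<Rightarrow> 'a \<Rightarrow> bool) \<Rightarrow> 'a list \<Rightarrow> bool" where
  "is_walk V E xs \<longleftrightarrow> xs \<noteq> [] \<and> set xs \<subseteq> V \<and> (\<forall>i. Suc i < length xs \<longrightarrow> E (xs ! i) (xs ! Suc i))"

definition graph_connected :: "'a set \<Rightarrow> ('a \<Rightarrow> 'a \<Rightarrow> bool) \<Rightarrow> bool" where
  "graph_connected V E \<longleftrightarrow>
     (\<forall>u\<in>V. \<forall>v\<in>V. \<exists>xs. is_walk V E xs \<and> hd xs = u \<and> last xs = v)"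

definition gdist :: "'a set \<Rightarrow> ('a \<Rightarrow> 'a \<Rightarrow> bool) \<Rightarrow> 'a \<Rightarrow> 'a \<Rightarrow> nat" where
  "gdist V E u v = (LEAST n. \<exists>xs. is_walk V E xs \<and> hd xs = u \<and> last xs = v \<and> length xs = Suc n)"

definition edge_set :: "('a \<Rightarrow> 'a \<Rightarrow> bool) \<Rightarrow> 'a set set" where
  "edge_set E = {{u, v} | u v. E u v}"

definition is_tree :: "'a set \<Rightarrow> ('a \<Rightarrow> 'a \<Rightarrow> bool) \<Rightarrow> bool" where
  "is_tree V E \<longleftrightarrow> finite V \<and> V \<noteq> {}
     \<and> (\<forall>u v. E u v \<longrightarrow> u \<in> V \<and> v \<in> V)
     \<and> (\<forall>u v. E u v \<longrightarrow> E v u) \<and> (\<forall>u. \<not> E u u)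
     \<and> graph_connected V E \<and> card (edge_set E) = card V - 1"

definition is_leaf :: "('a \<Rightarrow> 'a \<Rightarrow> bool) \<Rightarrow> 'a \<Rightarrow> bool" where
  "is_leaf E v \<longleftrightarrow> card (nbrs E v) = 1"

definition is_fort :: "'a set \<Rightarrow> ('a \<Rightarrow> 'a \<Rightarrow> bool) \<Rightarrow> 'a set \<Rightarrow> bool" where
  "is_fort V E F \<longleftrightarrow> F \<noteq> {} \<and> F \<subseteq> V \<and>
     (\<forall>v \<in> V - F. card (nbrs E v \<inter> F) \<noteq> 1)"

definition is_minimal_fort :: "'a set \<Rightarrow> ('a \<Rightarrow> 'a \<Rightarrow> bool) \<Rightarrow> 'a set \<Rightarrow> bool" where
  "is_minimal_fort V E F \<longleftrightarrow> is_fort V E F \<and> (\<forall>F'. F' \<subset> F \<longrightarrow> \<not> is_fort V E F')"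

end

theory Submission
  imports Defs
begin



lemma card_ge2_obtain:
  assumes "card X \<noteq> 1" "x \<in> X" "finite X"
  obtains y where "y \<in> X" "y \<noteq> x"
proof -
  have "X \<noteq> {x}" using assms by auto
  then show ?thesis using that assms(2) by blast
qed

lemma card1_mem: "card X = 1 \<Longrightarrow> s \<in> X \<Longrightarrow> X = {s}"
  by (metis card_1_singletonE singletonD)

lemma card_le1_mem: "finite X \<Longrightarrow> card X \<le> 1 \<Longrightarrow> s \<in> X \<Longrightarrow> X = {s}"
  using card_le_Suc0_iff_eq by fastforce

locale rt =
  fixes V :: "'a set" and E :: "'a \<Rightarrow> 'a \<Rightarrow> bool" and l :: 'a and p :: "'a \<Rightarrow> 'a" and d :: "'a \<Rightarrow> nat"
  assumes finV: "finite V" and lV: "l \<in> V"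
    and EV: "E u v \<Longrightarrow> u \<in> V \<and> v \<in> V"
    and Esym: "E u v \<Longrightarrow> E v u"
    and pE: "v \<in> V \<Longrightarrow> v \<noteq> l \<Longrightarrow> E v (p v)"
    and pd: "v \<in> V \<Longrightarrow> v \<noteq> l \<Longrightarrow> d (p v) < d v"
    and edge: "E u v \<Longrightarrow> (u \<noteq> l \<and> v = p u) \<or> (v \<noteq> l \<and> u = p v)"
begin

lemma pV: "v \<in> V \<Longrightarrow> v \<noteq> l \<Longrightarrow> p v \<in> V"
  using pE EV by blast

lemma nbrs_V: "nbrs E v \<subseteq> V"
  using EV unfolding nbrs_def by blast

lemma nbrs_fin: "finite (nbrs E v)"
  using finite_subset[OF nbrs_V finV] .

lemma edge_iff: "(E a b \<and> d a < d b) \<longleftrightarrow> (b \<in> V \<and> b \<noteq> l \<and> a = p b)"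
proof
  assume h: "E a b \<and> d a < d b"
  then have "b \<in> V" using EV by blast
  have aV: "a \<in> V" using EV h by blast
  have "(a \<noteq> l \<and> b = p a) \<or> (b \<noteq> l \<and> a = p b)" using edge h by blast
  moreover have "\<not> (a \<noteq> l \<and> b = p a)"
  proof
    assume "a \<noteq> l \<and> b = p a"
    then have "d b < d a" using pd[OF aV] by simp
    then show False using h by simp
  qed
  ultimately show "b \<in> V \<and> b \<noteq> l \<and> a = p b" using \<open>b \<in> V\<close> by blast
next
  assume "b \<in> V \<and> b \<noteq> l \<and> a = p b"
  then show "E a b \<and> d a < d b" using pE Esym pd by blast
qed

lemma nb_child: "E b w \<Longrightarrow> (b \<noteq> l \<Longrightarrow> w \<noteq> p b) \<Longrightarrow> w \<in> V \<and> w \<noteq> l \<and> p w = b"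
proof -
  assume a: "E b w" "b \<noteq> l \<Longrightarrow> w \<noteq> p b"
  have "w \<in> V" using EV a(1) by blast
  moreover have "(b \<noteq> l \<and> w = p b) \<or> (w \<noteq> l \<and> b = p w)" using edge a(1) by blast
  ultimately show ?thesis using a(2) by auto
qed

lemma child_exists: "v \<in> V \<Longrightarrow> v \<noteq> l \<Longrightarrow> \<exists>c. c \<in> V \<and> c \<noteq> l \<and> p c = l"
proof (induction "d v" arbitrary: v rule: less_induct)
  case less
  show ?case
  proof (cases "p v = l")
    case True then show ?thesis using less by blast
  next
    case False
    then show ?thesis using less pV pd by blast
  qed
qed

inductive desc :: "'a \<Rightarrow> 'a \<Rightarrow> bool" for c where
  desc_refl: "desc c c"
| desc_step: "v \<in> V \<Longrightarrow> v \<noteq> l \<Longrightarrow> desc c (p v) \<Longrightarrow> desc c v"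

lemma desc_d: "desc c v \<Longrightarrow> d c \<le> d v"
proof (induction rule: desc.induct)
  case desc_refl then show ?case by simp
next
  case (desc_step v)
  then have "d (p v) < d v" using pd by blast
  then show ?case using desc_step.IH by simp
qed

lemma desc_inv: "desc c v \<Longrightarrow> v \<noteq> c \<Longrightarrow> v \<in> V \<and> v \<noteq> l \<and> desc c (p v)"
  by (induction rule: desc.induct) auto

lemma desc_V: "desc c v \<Longrightarrow> c \<in> V \<Longrightarrow> v \<in> V"
  by (induction rule: desc.induct) auto

lemma desc_edge: "desc c u \<Longrightarrow> E u w \<Longrightarrow> \<not> desc c w \<Longrightarrow> u = c \<and> c \<noteq> l \<and> w = p c"
proof -
  assume a: "desc c u" "E u w" "\<not> desc c w"
  from edge[OF a(2)] show ?thesis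
  proof
    assume h: "u \<noteq> l \<and> w = p u"
    show ?thesis
    proof (cases "u = c")
      case True then show ?thesis using h by simp
    next
      case False then show ?thesis using desc_inv[OF a(1)] h a(3) by auto
    qed
  next
    assume h: "w \<noteq> l \<and> u = p w"
    then have "w \<in> V" using EV a(2) by blast
    then have "desc c w" using desc_step h a(1) by blast
    then show ?thesis using a(3) by blast
  qed
qed

definition ch :: "'a \<Rightarrow> 'a set" where "ch b = {c. c \<in> V \<and> c \<noteq> l \<and> p c = b}"

definition UU :: "'a set \<Rightarrow> 'a set" where "UU C = {v. \<exists>c\<in>C. desc c v}"

lemma U_out: "C \<subseteq> ch b \<Longrightarrow> w \<in> UU C \<Longrightarrow> E w v \<Longrightarrow> v \<notin> UU C \<Longrightarrow> w \<in> C \<and> v = b"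
  unfolding UU_def ch_def using desc_edge by blast

lemma U_d: "C \<subseteq> ch b \<Longrightarrow> x \<in> UU C \<Longrightarrow> d b < d x"
proof -
  assume a: "C \<subseteq> ch b" "x \<in> UU C"
  then obtain c where c: "c \<in> C" "desc c x" unfolding UU_def by blast
  then have "c \<in> V" "c \<noteq> l" "p c = b" using a(1) unfolding ch_def by auto
  then have "d b < d c" using pd by blast
  moreover have "d c \<le> d x" using desc_d[OF c(2)] .
  ultimately show ?thesis by simp
qed

lemma U_b: "C \<subseteq> ch b \<Longrightarrow> b \<notin> UU C"
  using U_d by blast

lemma U_pb: "C \<subseteq> ch b \<Longrightarrow> b \<in> V \<Longrightarrow> b \<noteq> l \<Longrightarrow> p b \<notin> UU C"
proof
  assume a: "C \<subseteq> ch b" "b \<in> V" "b \<noteq> l" "p b \<in> UU C"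
  have "d b < d (p b)" using U_d[OF a(1) a(4)] .
  moreover have "d (p b) < d b" using pd a(2,3) by blast
  ultimately show False by simp
qed

lemma U_l: "C \<subseteq> ch b \<Longrightarrow> l \<notin> UU C"
  unfolding UU_def ch_def using desc_inv by blast

lemma U_ch: "C \<subseteq> ch b \<Longrightarrow> x \<in> ch b \<Longrightarrow> x \<in> UU C \<Longrightarrow> x \<in> C"
proof -
  assume a: "C \<subseteq> ch b" "x \<in> ch b" "x \<in> UU C"
  then obtain c where c: "c \<in> C" "desc c x" unfolding UU_def by blast
  show "x \<in> C"
  proof (cases "x = c")
    case True then show ?thesis using c by simp
  next
    case False
    then have "desc c b" using desc_inv[OF c(2)] a(2) unfolding ch_def by auto
    then have "b \<in> UU C" using c unfolding UU_def by blast
    then show ?thesis using U_b a(1) by blast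
  qed
qed

lemma U_V: "C \<subseteq> ch b \<Longrightarrow> UU C \<subseteq> V"
  unfolding UU_def ch_def using desc_V by blast

lemma C_U: "C \<subseteq> UU C"
  unfolding UU_def using desc_refl by blast

end


context rt begin

lemma fort_leaf:
  assumes F: "is_fort V E S" and lS: "l \<in> S" and ex: "\<exists>v\<in>V. v \<noteq> l"
  shows "\<exists>x\<in>S. is_leaf E x"
proof (rule ccontr)
  assume nl: "\<not> (\<exists>x\<in>S. is_leaf E x)"
  have SV: "S \<subseteq> V" and Sne: "S \<noteq> {}" and Fc: "\<forall>v\<in>V - S. card (nbrs E v \<inter> S) \<noteq> 1"
    using F unfolding is_fort_def by auto
  have finS: "finite S" using SV finV finite_subset by blast
  define m where "m = Max (d ` S)"
  have "m \<in> d ` S" unfolding m_def using finS Sne by simp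
  then obtain s where s: "s \<in> S" "d s = m" by blast
  have smax: "\<forall>x\<in>S. d x \<le> d s" using s finS unfolding m_def by simp
  have sV: "s \<in> V" using s SV by blast
  obtain c where c: "c \<in> V" "c \<noteq> l" "p c = s"
  proof (cases "s = l")
    case True
    from ex obtain v where v: "v \<in> V" "v \<noteq> l" by blast
    from child_exists[OF v] obtain c0 where "c0 \<in> V" "c0 \<noteq> l" "p c0 = l" by blast
    then show ?thesis using that True by simp
  next
    case False
    have ps: "p s \<in> nbrs E s" using pE[OF sV False] unfolding nbrs_def by simp
    have cs: "card (nbrs E s) \<noteq> 1" using nl s unfolding is_leaf_def by blast
    obtain w where "w \<in> nbrs E s" "w \<noteq> p s"
      using card_ge2_obtain[OF cs ps nbrs_fin] by blast
    then show ?thesis using nb_child[of s w] that unfolding nbrs_def by auto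
  qed
  have dc: "d s < d c" using pd c by blast
  have cS: "c \<notin> S" using dc smax by fastforce
  have "nbrs E c \<inter> S = {s}"
  proof
    show "{s} \<subseteq> nbrs E c \<inter> S" using pE c s unfolding nbrs_def by auto
    show "nbrs E c \<inter> S \<subseteq> {s}"
    proof
      fix x assume x: "x \<in> nbrs E c \<inter> S"
      then have "E c x" unfolding nbrs_def by simp
      from edge[OF this] have "x = p c \<or> (x \<in> V \<and> x \<noteq> l \<and> c = p x)" using EV \<open>E c x\<close> by blast
      then show "x \<in> {s}"
      proof
        assume "x \<in> V \<and> x \<noteq> l \<and> c = p x"
        then have "d c < d x" using pd by blast
        then show ?thesis using x smax dc by fastforce
      qed (use c in simp)
    qed
  qed
  then have "card (nbrs E c \<inter> S) = 1" by simp
  moreover have "c \<in> V - S" using c cS by blast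
  ultimately show False using Fc by blast
qed

lemma sub_fort_two:
  assumes F: "is_fort V E S" and bV: "b \<in> V"
    and cd: "c \<in> S" "e \<in> S" "c \<noteq> e" "c \<in> ch b" "e \<in> ch b"
  shows "is_fort V E (S \<inter> UU {c, e})" and "l \<notin> S \<inter> UU {c, e}"
proof -
  let ?C = "{c, e}"
  have C: "?C \<subseteq> ch b" using cd by auto
  have SV: "S \<subseteq> V" and Fc: "\<forall>v\<in>V - S. card (nbrs E v \<inter> S) \<noteq> 1"
    using F unfolding is_fort_def by auto
  show "l \<notin> S \<inter> UU {c, e}" using U_l[OF C] by blast
  have ne: "S \<inter> UU ?C \<noteq> {}" using C_U[of ?C] cd by blast
  have "\<forall>v\<in>V - S \<inter> UU ?C. card (nbrs E v \<inter> (S \<inter> UU ?C)) \<noteq> 1"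
  proof
    fix v assume v: "v \<in> V - S \<inter> UU ?C"
    show "card (nbrs E v \<inter> (S \<inter> UU ?C)) \<noteq> 1"
    proof (cases "v = b")
      case True
      have "nbrs E v \<inter> (S \<inter> UU ?C) = ?C"
      proof
        show "?C \<subseteq> nbrs E v \<inter> (S \<inter> UU ?C)"
        proof -
          have "c \<in> V" "c \<noteq> l" "p c = b" "e \<in> V" "e \<noteq> l" "p e = b" using cd unfolding ch_def by auto
          then have "E b c" "E b e" using pE Esym by metis+
          then show ?thesis using C_U[of ?C] cd True unfolding nbrs_def by auto
        qed
        show "nbrs E v \<inter> (S \<inter> UU ?C) \<subseteq> ?C"
        proof
          fix w assume w: "w \<in> nbrs E v \<inter> (S \<inter> UU ?C)"
          have "b \<noteq> l \<Longrightarrow> w \<noteq> p b" using U_pb[OF C bV] w by blast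
          then have "w \<in> ch b" using nb_child[of b w] w True unfolding nbrs_def ch_def by auto
          then show "w \<in> ?C" using U_ch[OF C] w by blast
        qed
      qed
      then show ?thesis using cd by simp
    next
      case False
      show ?thesis
      proof (cases "v \<in> UU ?C")
        case True
        then have vS: "v \<notin> S" using v by blast
        have "nbrs E v \<inter> (S \<inter> UU ?C) = nbrs E v \<inter> S"
        proof (rule equalityI; rule subsetI)
          fix w assume w: "w \<in> nbrs E v \<inter> S"
          have "w \<in> UU ?C"
          proof (rule ccontr)
            assume "w \<notin> UU ?C"
            then have "v \<in> ?C" using U_out[OF C True, of w] w unfolding nbrs_def by blast
            then show False using vS cd by blast
          qed
          then show "w \<in> nbrs E v \<inter> (S \<inter> UU ?C)" using w by blast
        qed auto
        then show ?thesis using Fc v vS by auto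
      next
        case nU: False
        have "nbrs E v \<inter> (S \<inter> UU ?C) = {}"
        proof (rule ccontr)
          assume "nbrs E v \<inter> (S \<inter> UU ?C) \<noteq> {}"
          then obtain w where w: "E v w" "w \<in> UU ?C" unfolding nbrs_def by blast
          then have "v = b" using U_out[OF C w(2) Esym[OF w(1)] nU] by blast
          then show False using False by blast
        qed
        then show ?thesis by simp
      qed
    qed
  qed
  moreover have "S \<inter> UU ?C \<subseteq> V" using SV by blast
  ultimately show "is_fort V E (S \<inter> UU ?C)" using ne unfolding is_fort_def by simp
qed

end


context rt begin

lemma two_obtain:
  assumes "finite X" "card X \<ge> 2"
  obtains x y where "x \<in> X" "y \<in> X" "x \<noteq> y"
proof -
  have "X \<noteq> {}" using assms by auto
  then obtain x where "x \<in> X" by blast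
  moreover have "X \<noteq> {x}" using assms by auto
  ultimately show ?thesis using that by blast
qed

lemma sub_fort_iv:
  assumes F: "is_fort V E S" and bV: "b \<in> V" and bl: "b \<noteq> l" and aS: "p b \<in> S" and bS: "b \<in> S"
    and cS: "c \<in> S" and cch: "c \<in> ch b"
  shows "is_fort V E (S - ({b} \<union> UU {x \<in> ch b. x \<notin> S}))"
proof -
  let ?C = "{x \<in> ch b. x \<notin> S}"
  let ?F = "S - ({b} \<union> UU ?C)"
  have C: "?C \<subseteq> ch b" by blast
  have SV: "S \<subseteq> V" and Fc: "\<forall>v\<in>V - S. card (nbrs E v \<inter> S) \<noteq> 1"
    using F unfolding is_fort_def by auto
  have dab: "d (p b) < d b" using pd bV bl by blast
  have dbc: "d b < d c" using pd cch unfolding ch_def by force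
  have aF: "p b \<in> ?F" using aS dab U_pb[OF C bV bl] by auto
  have cU: "c \<notin> UU ?C" using U_ch[OF C cch] cS by blast
  have cF: "c \<in> ?F" using cS cU dbc by auto
  have "\<forall>v\<in>V - ?F. card (nbrs E v \<inter> ?F) \<noteq> 1"
  proof
    fix v assume v: "v \<in> V - ?F"
    show "card (nbrs E v \<inter> ?F) \<noteq> 1"
    proof (cases "v = b")
      case True
      have "E b (p b)" using pE bV bl by blast
      moreover have "E b c" using pE Esym cch unfolding ch_def by force
      ultimately have sub: "{p b, c} \<subseteq> nbrs E v \<inter> ?F" using aF cF True unfolding nbrs_def by auto
      have "p b \<noteq> c" using dab dbc by auto
      then have "card {p b, c} = 2" by simp
      moreover have "finite (nbrs E v \<inter> ?F)" using nbrs_fin by blast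
      ultimately have "card (nbrs E v \<inter> ?F) \<ge> 2" using sub card_mono by metis
      then show ?thesis by simp
    next
      case vb: False
      show ?thesis
      proof (cases "v \<in> UU ?C")
        case True
        have "nbrs E v \<inter> ?F = {}"
        proof (rule ccontr)
          assume "nbrs E v \<inter> ?F \<noteq> {}"
          then obtain w where w: "E v w" "w \<in> ?F" unfolding nbrs_def by blast
          then have "w \<notin> UU ?C" "w \<noteq> b" by auto
          then show False using U_out[OF C True w(1)] by blast
        qed
        then show ?thesis by simp
      next
        case nU: False
        then have vS: "v \<notin> S" using v vb by blast
        have "nbrs E v \<inter> ?F = nbrs E v \<inter> S"
        proof (rule equalityI; rule subsetI)
          fix w assume w: "w \<in> nbrs E v \<inter> S"
          then have Evw: "E v w" unfolding nbrs_def by simp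
          have wb: "w \<noteq> b"
          proof
            assume wb: "w = b"
            from edge[OF Evw] show False
            proof
              assume h: "v \<noteq> l \<and> w = p v"
              have "v \<in> V" using EV[OF Evw] by blast
              then have "v \<in> ch b" unfolding ch_def using h wb by simp
              then have "v \<in> ?C" using vS by blast
              then have "v \<in> UU ?C" using C_U[of ?C] by blast
              then show False using nU by blast
            next
              assume h: "w \<noteq> l \<and> v = p w"
              then show False using wb aS vS by simp
            qed
          qed
          have "w \<notin> UU ?C"
          proof
            assume "w \<in> UU ?C"
            then have "v = b" using U_out[OF C _ Esym[OF Evw] nU] by blast
            then show False using vb by blast
          qed
          then show "w \<in> nbrs E v \<inter> ?F" using w wb by blast
        qed auto
        then show ?thesis using Fc v vS by auto
      qed
    qed
  qed
  note C = this
  have B: "?F \<subseteq> V" using SV by blast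
  have A: "?F \<noteq> {}" using aF by blast
  show ?thesis unfolding is_fort_def by (rule conjI[OF A conjI[OF B C]])
qed

lemma minfort_cond:
  assumes M: "is_minimal_fort V E S" and lS: "l \<in> S" and bV: "b \<in> V" and bl: "b \<noteq> l"
  shows "(p b \<notin> S \<and> b \<notin> S \<longrightarrow> nbrs E b \<inter> S = {}) \<and>
         (p b \<notin> S \<and> b \<in> S \<longrightarrow> card (nbrs E b \<inter> S) \<le> 1) \<and>
         (p b \<in> S \<and> b \<notin> S \<longrightarrow> card ((nbrs E b \<inter> S) - {p b}) = 1) \<and>
         (p b \<in> S \<and> b \<in> S \<longrightarrow> card ((nbrs E b \<inter> S) - {p b}) = 0)"
proof -
  have F: "is_fort V E S" and minF: "\<And>F'. F' \<subset> S \<Longrightarrow> \<not> is_fort V E F'"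
    using M unfolding is_minimal_fort_def by auto
  have SV: "S \<subseteq> V" and Fc: "\<forall>v\<in>V - S. card (nbrs E v \<inter> S) \<noteq> 1"
    using F unfolding is_fort_def by auto
  have fin: "finite (nbrs E b \<inter> S - X)" for X using nbrs_fin by blast
  have chb: "w \<in> ch b" if "w \<in> nbrs E b" "w \<noteq> p b" for w
    using nb_child[of b w] that unfolding nbrs_def ch_def by auto
  have two: False if "c \<in> nbrs E b \<inter> S - {p b}" "e \<in> nbrs E b \<inter> S - {p b}" "c \<noteq> e" for c e
  proof -
    have "c \<in> ch b" "e \<in> ch b" using that chb by auto
    then have "is_fort V E (S \<inter> UU {c, e})" "l \<notin> S \<inter> UU {c, e}"
      using sub_fort_two[OF F bV, of c e] that by auto
    moreover have "S \<inter> UU {c, e} \<subset> S" using calculation(2) lS by blast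
    ultimately show False using minF by blast
  qed
  have le1: "card (nbrs E b \<inter> S - {p b}) \<le> 1"
  proof (rule ccontr)
    assume "\<not> ?thesis"
    then have "2 \<le> card (nbrs E b \<inter> S - {p b})" by simp
    then obtain c e where "c \<in> nbrs E b \<inter> S - {p b}" "e \<in> nbrs E b \<inter> S - {p b}" "c \<noteq> e"
      using two_obtain[OF fin[of "{p b}"]] by blast
    then show False using two by blast
  qed
  have pbN: "p b \<in> nbrs E b" using pE bV bl unfolding nbrs_def by simp
  have c1: "p b \<notin> S \<Longrightarrow> b \<notin> S \<Longrightarrow> nbrs E b \<inter> S = {}"
  proof -
    assume a: "p b \<notin> S" "b \<notin> S"
    then have eq: "nbrs E b \<inter> S - {p b} = nbrs E b \<inter> S" by blast
    have "card (nbrs E b \<inter> S) \<noteq> 1" using Fc a bV by blast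
    then have "card (nbrs E b \<inter> S) = 0" using le1 eq by simp
    then show ?thesis using fin[of "{}"] by simp
  qed
  have c2: "p b \<notin> S \<Longrightarrow> card (nbrs E b \<inter> S) \<le> 1"
  proof -
    assume a: "p b \<notin> S"
    then have eq: "nbrs E b \<inter> S - {p b} = nbrs E b \<inter> S" by blast
    then show ?thesis using le1 by simp
  qed
  have c3: "p b \<in> S \<Longrightarrow> b \<notin> S \<Longrightarrow> card (nbrs E b \<inter> S - {p b}) = 1"
  proof -
    assume a: "p b \<in> S" "b \<notin> S"
    have "card (nbrs E b \<inter> S) \<noteq> 1" using Fc a bV by blast
    moreover have "p b \<in> nbrs E b \<inter> S" using pbN a by blast
    moreover have "Suc (card (nbrs E b \<inter> S - {p b})) = card (nbrs E b \<inter> S)"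
      using card_Suc_Diff1[OF fin[of "{}"]] calculation(2) by simp
    ultimately have "card (nbrs E b \<inter> S - {p b}) \<noteq> 0" by simp
    then show ?thesis using le1 by simp
  qed
  have c4: "p b \<in> S \<Longrightarrow> b \<in> S \<Longrightarrow> card (nbrs E b \<inter> S - {p b}) = 0"
  proof (rule ccontr)
    assume a: "p b \<in> S" "b \<in> S" "card (nbrs E b \<inter> S - {p b}) \<noteq> 0"
    then obtain c where c: "c \<in> nbrs E b \<inter> S - {p b}" by (metis card.empty ex_in_conv)
    then have cch: "c \<in> ch b" using chb by blast
    let ?F = "S - ({b} \<union> UU {x \<in> ch b. x \<notin> S})"
    have "is_fort V E ?F" using sub_fort_iv[OF F bV bl a(1) a(2), of c] c cch by blast
    moreover have "?F \<subset> S" using a(2) by blast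
    ultimately show False using minF by blast
  qed
  show ?thesis using c1 c2 c3 c4 by blast
qed

end


context rt begin

lemma cond_minfort:
  assumes SV: "S \<subseteq> V" and lS: "l \<in> S" and leaf: "is_leaf E l"
    and cond: "\<And>b. b \<in> V \<Longrightarrow> b \<noteq> l \<Longrightarrow>
         (p b \<notin> S \<and> b \<notin> S \<longrightarrow> nbrs E b \<inter> S = {}) \<and>
         (p b \<notin> S \<and> b \<in> S \<longrightarrow> card (nbrs E b \<inter> S) \<le> 1) \<and>
         (p b \<in> S \<and> b \<notin> S \<longrightarrow> card ((nbrs E b \<inter> S) - {p b}) = 1) \<and>
         (p b \<in> S \<and> b \<in> S \<longrightarrow> card ((nbrs E b \<inter> S) - {p b}) = 0)"
  shows "is_minimal_fort V E S"
proof -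
  have fin: "finite (nbrs E b \<inter> X)" for b X using nbrs_fin by blast
  have pN: "p b \<in> nbrs E b" if "b \<in> V" "b \<noteq> l" for b using pE that unfolding nbrs_def by simp
  have pN': "b \<in> nbrs E (p b)" if "b \<in> V" "b \<noteq> l" for b using pE Esym that unfolding nbrs_def by blast
  have c4: "nbrs E b \<inter> S \<subseteq> {p b}" if "b \<in> V" "b \<noteq> l" "p b \<in> S" "b \<in> S" for b
  proof -
    have "card (nbrs E b \<inter> S - {p b}) = 0" using cond that by blast
    then have "nbrs E b \<inter> S - {p b} = {}" using fin[of b "S - {p b}"] by (simp add: Int_Diff)
    then show ?thesis by blast
  qed
  have fort: "is_fort V E S"
    unfolding is_fort_def
  proof (intro conjI ballI)
    show "S \<noteq> {}" using lS by blast
    show "S \<subseteq> V" by (rule SV)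
    fix v assume v: "v \<in> V - S"
    then have vV: "v \<in> V" and vl: "v \<noteq> l" and vS: "v \<notin> S" using lS by auto
    show "card (nbrs E v \<inter> S) \<noteq> 1"
    proof (cases "p v \<in> S")
      case False
      then have "nbrs E v \<inter> S = {}" using cond[OF vV vl] vS by blast
      then show ?thesis by simp
    next
      case True
      then have c: "card (nbrs E v \<inter> S - {p v}) = 1" using cond[OF vV vl] vS by blast
      have "p v \<in> nbrs E v \<inter> S" using pN[OF vV vl] True by blast
      then have "Suc (card (nbrs E v \<inter> S - {p v})) = card (nbrs E v \<inter> S)"
        using card_Suc_Diff1[OF fin[of v S]] by simp
      then have "card (nbrs E v \<inter> S) = 2" using c by simp
      then show ?thesis by simp
    qed
  qed
  have "\<not> is_fort V E F" if FS: "F \<subset> S" for F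
  proof
    assume F: "is_fort V E F"
    have Fc: "\<forall>v\<in>V - F. card (nbrs E v \<inter> F) \<noteq> 1" and Fne: "F \<noteq> {}" using F unfolding is_fort_def by auto
    have single: "False" if "v \<in> V" "v \<notin> F" "nbrs E v \<inter> F = {w}" for v w
    proof -
      have "card (nbrs E v \<inter> F) = 1" using that(3) by simp
      moreover have "v \<in> V - F" using that(1,2) by blast
      ultimately show False using Fc by blast
    qed
    have key: "s \<in> F \<longleftrightarrow> l \<in> F" if "s \<in> S" for s
      using that
    proof (induction "d s" arbitrary: s rule: less_induct)
      case less
      show ?case
      proof (cases "s = l")
        case True then show ?thesis by simp
      next
        case sl: False
        have sV: "s \<in> V" using less SV by blast
        define a where "a = p s"
        have aV: "a \<in> V" using pV sV sl a_def by blast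
        have das: "d a < d s" using pd sV sl a_def by blast
        have sNa: "s \<in> nbrs E a" using pN'[OF sV sl] a_def by simp
        have aNs: "a \<in> nbrs E s" using pN[OF sV sl] a_def by simp
        show ?thesis
        proof (cases "a \<in> S")
          case aS: True
          have IH: "a \<in> F \<longleftrightarrow> l \<in> F" using less.hyps[OF das aS] .
          have Ns: "nbrs E s \<inter> S \<subseteq> {a}" using c4[OF sV sl] aS less.prems a_def by blast
          have "s \<in> F \<longleftrightarrow> a \<in> F"
          proof
            assume sF: "s \<in> F"
            show "a \<in> F"
            proof (rule ccontr)
              assume aF: "a \<notin> F"
              have "nbrs E a \<inter> F = {s}"
              proof (cases "a = l")
                case True
                have "card (nbrs E a) = 1" using leaf True unfolding is_leaf_def by simp
                then obtain z where "nbrs E a = {z}" using card_1_singletonE by blast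
                then show ?thesis using sNa sF by auto
              next
                case al: False
                have dga: "d (p a) < d a" using pd aV al by blast
                show ?thesis
                proof (cases "p a \<in> S")
                  case True
                  have "nbrs E a \<inter> S \<subseteq> {p a}" using c4[OF aV al True aS] .
                  then have "s = p a" using sNa less.prems by blast
                  then show ?thesis using dga das by simp
                next
                  case False
                  have c1: "card (nbrs E a \<inter> S) \<le> 1" using cond[OF aV al] False aS by blast
                  have "s \<in> nbrs E a \<inter> S" using sNa less.prems by blast
                  have "nbrs E a \<inter> S = {s}" using card_le1_mem[OF fin[of a S] c1 \<open>s \<in> nbrs E a \<inter> S\<close>] .
                  then show ?thesis using sF FS by blast
                qed
              qed
              then show False using single aV aF by blast
            qed
          next
            assume aF: "a \<in> F"
            show "s \<in> F"
            proof (rule ccontr)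
              assume sF: "s \<notin> F"
              have "nbrs E s \<inter> F = {a}" using Ns aNs aF FS by blast
              then show False using single sV sF by blast
            qed
          qed
          then show ?thesis using IH by simp
        next
          case aS: False
          have al: "a \<noteq> l" using aS lS by blast
          have dga: "d (p a) < d a" using pd aV al by blast
          have gS: "p a \<in> S"
          proof (rule ccontr)
            assume "p a \<notin> S"
            then have "nbrs E a \<inter> S = {}" using cond[OF aV al] aS by blast
            then show False using sNa less.prems by blast
          qed
          have c1: "card (nbrs E a \<inter> S - {p a}) = 1" using cond[OF aV al] aS gS by blast
          have spa: "s \<noteq> p a"
          proof
            assume "s = p a"
            then show False using dga das by simp
          qed
          have smem: "s \<in> nbrs E a \<inter> S - {p a}" using sNa less.prems spa by blast
          have eq1: "nbrs E a \<inter> S - {p a} = {s}" using card1_mem[OF c1 smem] .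
          have "p a \<in> nbrs E a" using pN[OF aV al] .
          then have NaS: "nbrs E a \<inter> S = {p a, s}" using gS eq1 by blast
          have aF: "a \<notin> F" using aS FS by blast
          have "nbrs E a \<inter> F = {p a, s} \<inter> F" using NaS FS by blast
          then have "p a \<in> F \<longleftrightarrow> s \<in> F" using single[OF aV aF] by auto
          moreover have "p a \<in> F \<longleftrightarrow> l \<in> F" using less.hyps[of "p a"] dga das gS by simp
          ultimately show ?thesis by simp
        qed
      qed
    qed
    obtain x where "x \<in> F" using Fne by blast
    then have "l \<in> F" using key FS by blast
    then have "S \<subseteq> F" using key by blast
    then show False using FS by blast
  qed
  then show ?thesis using fort unfolding is_minimal_fort_def by blast
qed

end



lemma gdist_walk:
  assumes "graph_connected V E" "u \<in> V" "v \<in> V"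
  shows "\<exists>xs. is_walk V E xs \<and> hd xs = u \<and> last xs = v \<and> length xs = Suc (gdist V E u v)"
proof -
  obtain xs where xs: "is_walk V E xs" "hd xs = u" "last xs = v"
    using assms unfolding graph_connected_def by blast
  then have "xs \<noteq> []" unfolding is_walk_def by blast
  then have "length xs = Suc (length xs - 1)" by simp
  then have ex: "\<exists>n. \<exists>xs. is_walk V E xs \<and> hd xs = u \<and> last xs = v \<and> length xs = Suc n"
    using xs by blast
  show ?thesis unfolding gdist_def by (rule LeastI_ex[OF ex])
qed

lemma gdist_le:
  assumes "is_walk V E xs" "hd xs = u" "last xs = v" "length xs = Suc n"
  shows "gdist V E u v \<le> n"
  unfolding gdist_def by (rule Least_le) (use assms in blast)

lemma gdist_parent:
  assumes conn: "graph_connected V E" and lV: "l \<in> V" and vV: "v \<in> V" and vl: "v \<noteq> l"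
    and sym: "\<And>x y. E x y \<Longrightarrow> E y x"
  shows "\<exists>u. E v u \<and> gdist V E l u < gdist V E l v"
proof -
  define n where "n = gdist V E l v"
  obtain xs where xs: "is_walk V E xs" "hd xs = l" "last xs = v" "length xs = Suc n"
    using gdist_walk[OF conn lV vV] unfolding n_def by blast
  have n0: "n \<noteq> 0"
  proof
    assume "n = 0"
    then obtain x where "xs = [x]" using xs(4) by (cases xs) auto
    then show False using xs vl by simp
  qed
  define ys where "ys = take n xs"
  have lys: "length ys = n" using xs(4) unfolding ys_def by simp
  have ysne: "ys \<noteq> []" using lys n0 by auto
  have wk: "is_walk V E ys"
    unfolding is_walk_def
  proof (intro conjI allI impI)
    show "ys \<noteq> []" by (rule ysne)
    show "set ys \<subseteq> V" using xs(1) set_take_subset[of n xs] unfolding ys_def is_walk_def by blast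
    fix i assume i: "Suc i < length ys"
    then have "Suc i < length xs" using lys xs(4) by simp
    then have "E (xs ! i) (xs ! Suc i)" using xs(1) unfolding is_walk_def by blast
    moreover have "ys ! i = xs ! i" "ys ! Suc i = xs ! Suc i" using i lys unfolding ys_def by simp_all
    ultimately show "E (ys ! i) (ys ! Suc i)" by simp
  qed
  have hys: "hd ys = l" using xs(2) n0 unfolding ys_def by (simp add: hd_take)
  have lasty: "last ys = xs ! (n - 1)" using ysne lys n0 unfolding ys_def
    by (simp add: last_conv_nth)
  have "xs \<noteq> []" using xs(4) by auto
  then have lastx: "last xs = xs ! n" using xs(4) by (simp add: last_conv_nth)
  have i: "Suc (n - 1) < length xs" using xs(4) n0 by simp
  have "E (xs ! (n - 1)) (xs ! Suc (n - 1))" using xs(1) i unfolding is_walk_def by blast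
  then have E1: "E (xs ! (n - 1)) v" using n0 lastx xs(3) by simp
  have "gdist V E l (xs ! (n - 1)) \<le> n - 1"
    using gdist_le[OF wk hys lasty] lys n0 by simp
  then have "gdist V E l (xs ! (n - 1)) < gdist V E l v" using n0 unfolding n_def by simp
  then show ?thesis using sym[OF E1] by blast
qed

lemma tree_rt:
  assumes T: "is_tree V E" and rV: "r \<in> V"
  shows "rt V E r (\<lambda>v. SOME u. E v u \<and> gdist V E r u < gdist V E r v) (gdist V E r)"
proof -
  let ?d = "gdist V E r"
  define P where "P = (\<lambda>v. SOME u. E v u \<and> ?d u < ?d v)"
  have finV: "finite V" and EV: "\<And>u v. E u v \<Longrightarrow> u \<in> V \<and> v \<in> V"
    and sym: "\<And>u v. E u v \<Longrightarrow> E v u" and irr: "\<And>u. \<not> E u u"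
    and conn: "graph_connected V E" and ce: "card (edge_set E) = card V - 1"
    using T unfolding is_tree_def by auto
  have Pp: "E v (P v) \<and> ?d (P v) < ?d v" if "v \<in> V" "v \<noteq> r" for v
    unfolding P_def by (rule someI_ex) (rule gdist_parent[OF conn rV that sym])
  define phi where "phi = (\<lambda>v. {v, P v})"
  have inj: "inj_on phi (V - {r})"
  proof (rule inj_onI)
    fix v w assume v: "v \<in> V - {r}" and w: "w \<in> V - {r}" and eq: "phi v = phi w"
    show "v = w"
    proof (rule ccontr)
      assume vw: "v \<noteq> w"
      from eq have "{v, P v} = {w, P w}" unfolding phi_def .
      then have "(v = w \<and> P v = P w) \<or> (v = P w \<and> P v = w)" by (simp only: doubleton_eq_iff)
      then have e1: "P w = v" and e2: "P v = w" using vw by iprover+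
      have a1: "?d (P v) < ?d v" using Pp[of v] v by blast
      have a2: "?d (P w) < ?d w" using Pp[of w] w by blast
      have "?d w < ?d v" using a1 e2 by simp
      moreover have "?d v < ?d w" using a2 e1 by simp
      ultimately show False by simp
    qed
  qed
  have sub: "phi ` (V - {r}) \<subseteq> edge_set E"
    unfolding phi_def edge_set_def using Pp by blast
  have fe: "finite (edge_set E)"
  proof (rule finite_subset)
    show "edge_set E \<subseteq> Pow V" unfolding edge_set_def using EV by blast
    show "finite (Pow V)" using finV by simp
  qed
  have "card (phi ` (V - {r})) = card (V - {r})" using card_image[OF inj] .
  also have "\<dots> = card V - 1" using rV finV by simp
  also have "\<dots> = card (edge_set E)" using ce by simp
  finally have eqs: "phi ` (V - {r}) = edge_set E" using card_subset_eq[OF fe sub] by simp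
  show ?thesis
  proof (unfold_locales)
    show "finite V" by (rule finV)
    show "r \<in> V" by (rule rV)
    show "\<And>u v. E u v \<Longrightarrow> u \<in> V \<and> v \<in> V" by (rule EV)
    show "\<And>u v. E u v \<Longrightarrow> E v u" by (rule sym)
    show "\<And>v. v \<in> V \<Longrightarrow> v \<noteq> r \<Longrightarrow> E v (SOME u. E v u \<and> ?d u < ?d v)"
      using Pp unfolding P_def by blast
    show "\<And>v. v \<in> V \<Longrightarrow> v \<noteq> r \<Longrightarrow> ?d (SOME u. E v u \<and> ?d u < ?d v) < ?d v"
      using Pp unfolding P_def by blast
    fix u v assume uv: "E u v"
    then have "{u, v} \<in> edge_set E" unfolding edge_set_def by blast
    then obtain w where w: "w \<in> V - {r}" "{u, v} = {w, P w}" using eqs unfolding phi_def by auto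
    then have "(u = w \<and> v = P w) \<or> (u = P w \<and> v = w)" by (simp only: doubleton_eq_iff)
    then have "(u \<noteq> r \<and> v = P u) \<or> (v \<noteq> r \<and> u = P v)"
    proof (elim disjE conjE)
      assume "u = w" "v = P w" then show ?thesis using w(1) by simp
    next
      assume "u = P w" "v = w" then show ?thesis using w(1) by simp
    qed
    then show "(u \<noteq> r \<and> v = (SOME u'. E u u' \<and> ?d u' < ?d u)) \<or> (v \<noteq> r \<and> u = (SOME u'. E v u' \<and> ?d u' < ?d v))"
      unfolding P_def .
  qed
qed




theorem mainTheorem8:
  fixes V :: "'a set" and E :: "'a \<Rightarrow> 'a \<Rightarrow> bool" and S :: "'a set"
  assumes "is_tree V E" and "card V \<ge> 3" and "S \<subseteq> V"
  shows "is_minimal_fort V E S \<longleftrightarrow>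
    ((\<exists>l\<in>S. is_leaf E l) \<and>
     (\<forall>l\<in>S. is_leaf E l \<longrightarrow>
        (\<forall>a b. E a b \<and> gdist V E l a < gdist V E l b \<longrightarrow>
           (a \<notin> S \<and> b \<notin> S \<longrightarrow> nbrs E b \<inter> S = {}) \<and>
           (a \<notin> S \<and> b \<in> S \<longrightarrow> card (nbrs E b \<inter> S) \<le> 1) \<and>
           (a \<in> S \<and> b \<notin> S \<longrightarrow> card ((nbrs E b \<inter> S) - {a}) = 1) \<and>
           (a \<in> S \<and> b \<in> S \<longrightarrow> card ((nbrs E b \<inter> S) - {a}) = 0))))"
proof -
  note T = assms(1)
  have SV: "S \<subseteq> V" by (rule assms(3))
  have ex: "\<exists>v\<in>V. v \<noteq> r" for r
  proof (rule ccontr)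
    assume "\<not> (\<exists>v\<in>V. v \<noteq> r)"
    then have "V \<subseteq> {r}" by blast
    then have "card V \<le> 1" using card_mono[of "{r}" V] by simp
    then show False using assms(2) by simp
  qed
  have RT: "rt V E r (\<lambda>v. SOME u. E v u \<and> gdist V E r u < gdist V E r v) (gdist V E r)"
    if "r \<in> V" for r using tree_rt[OF T that] .
  show ?thesis
  proof
    assume M: "is_minimal_fort V E S"
    then have F: "is_fort V E S" unfolding is_minimal_fort_def by blast
    then obtain r where rS: "r \<in> S" unfolding is_fort_def by blast
    then have rV: "r \<in> V" using SV by blast
    have I: "\<exists>l\<in>S. is_leaf E l" using rt.fort_leaf[OF RT[OF rV] F rS ex] .
    have II: "\<forall>l\<in>S. is_leaf E l \<longrightarrow>
        (\<forall>a b. E a b \<and> gdist V E l a < gdist V E l b \<longrightarrow>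
           (a \<notin> S \<and> b \<notin> S \<longrightarrow> nbrs E b \<inter> S = {}) \<and>
           (a \<notin> S \<and> b \<in> S \<longrightarrow> card (nbrs E b \<inter> S) \<le> 1) \<and>
           (a \<in> S \<and> b \<notin> S \<longrightarrow> card ((nbrs E b \<inter> S) - {a}) = 1) \<and>
           (a \<in> S \<and> b \<in> S \<longrightarrow> card ((nbrs E b \<inter> S) - {a}) = 0))"
    proof (intro ballI impI allI)
      fix l a b assume lS: "l \<in> S" and lf: "is_leaf E l" and h: "E a b \<and> gdist V E l a < gdist V E l b"
      have lV: "l \<in> V" using lS SV by blast
      define P where "P = (\<lambda>v. SOME u. E v u \<and> gdist V E l u < gdist V E l v)"
      have R: "rt V E l P (gdist V E l)" unfolding P_def by (rule RT[OF lV])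
      have hb: "b \<in> V \<and> b \<noteq> l \<and> a = P b" using rt.edge_iff[OF R] h by blast
      have "(P b \<notin> S \<and> b \<notin> S \<longrightarrow> nbrs E b \<inter> S = {}) \<and>
         (P b \<notin> S \<and> b \<in> S \<longrightarrow> card (nbrs E b \<inter> S) \<le> 1) \<and>
         (P b \<in> S \<and> b \<notin> S \<longrightarrow> card ((nbrs E b \<inter> S) - {P b}) = 1) \<and>
         (P b \<in> S \<and> b \<in> S \<longrightarrow> card ((nbrs E b \<inter> S) - {P b}) = 0)"
        using rt.minfort_cond[OF R M lS] hb by blast
      then show "(a \<notin> S \<and> b \<notin> S \<longrightarrow> nbrs E b \<inter> S = {}) \<and>
           (a \<notin> S \<and> b \<in> S \<longrightarrow> card (nbrs E b \<inter> S) \<le> 1) \<and>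
           (a \<in> S \<and> b \<notin> S \<longrightarrow> card ((nbrs E b \<inter> S) - {a}) = 1) \<and>
           (a \<in> S \<and> b \<in> S \<longrightarrow> card ((nbrs E b \<inter> S) - {a}) = 0)"
        using hb by simp
    qed
    show "(\<exists>l\<in>S. is_leaf E l) \<and> (\<forall>l\<in>S. is_leaf E l \<longrightarrow>
        (\<forall>a b. E a b \<and> gdist V E l a < gdist V E l b \<longrightarrow>
           (a \<notin> S \<and> b \<notin> S \<longrightarrow> nbrs E b \<inter> S = {}) \<and>
           (a \<notin> S \<and> b \<in> S \<longrightarrow> card (nbrs E b \<inter> S) \<le> 1) \<and>
           (a \<in> S \<and> b \<notin> S \<longrightarrow> card ((nbrs E b \<inter> S) - {a}) = 1) \<and>
           (a \<in> S \<and> b \<in> S \<longrightarrow> card ((nbrs E b \<inter> S) - {a}) = 0)))"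
      using I II by (rule conjI)
  next
    assume H: "(\<exists>l\<in>S. is_leaf E l) \<and> (\<forall>l\<in>S. is_leaf E l \<longrightarrow>
        (\<forall>a b. E a b \<and> gdist V E l a < gdist V E l b \<longrightarrow>
           (a \<notin> S \<and> b \<notin> S \<longrightarrow> nbrs E b \<inter> S = {}) \<and>
           (a \<notin> S \<and> b \<in> S \<longrightarrow> card (nbrs E b \<inter> S) \<le> 1) \<and>
           (a \<in> S \<and> b \<notin> S \<longrightarrow> card ((nbrs E b \<inter> S) - {a}) = 1) \<and>
           (a \<in> S \<and> b \<in> S \<longrightarrow> card ((nbrs E b \<inter> S) - {a}) = 0)))"
    then obtain l where lS: "l \<in> S" and lf: "is_leaf E l" by blast
    have lV: "l \<in> V" using lS SV by blast
    define P where "P = (\<lambda>v. SOME u. E v u \<and> gdist V E l u < gdist V E l v)"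
    have R: "rt V E l P (gdist V E l)" unfolding P_def by (rule RT[OF lV])
    have H2: "\<forall>a b. E a b \<and> gdist V E l a < gdist V E l b \<longrightarrow>
           (a \<notin> S \<and> b \<notin> S \<longrightarrow> nbrs E b \<inter> S = {}) \<and>
           (a \<notin> S \<and> b \<in> S \<longrightarrow> card (nbrs E b \<inter> S) \<le> 1) \<and>
           (a \<in> S \<and> b \<notin> S \<longrightarrow> card ((nbrs E b \<inter> S) - {a}) = 1) \<and>
           (a \<in> S \<and> b \<in> S \<longrightarrow> card ((nbrs E b \<inter> S) - {a}) = 0)"
      using H lS lf by blast
    show "is_minimal_fort V E S"
    proof (rule rt.cond_minfort[OF R SV lS lf])
      fix b assume b: "b \<in> V" "b \<noteq> l"
      have "E (P b) b \<and> gdist V E l (P b) < gdist V E l b" using rt.edge_iff[OF R] b by blast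
      then show "(P b \<notin> S \<and> b \<notin> S \<longrightarrow> nbrs E b \<inter> S = {}) \<and>
         (P b \<notin> S \<and> b \<in> S \<longrightarrow> card (nbrs E b \<inter> S) \<le> 1) \<and>
         (P b \<in> S \<and> b \<notin> S \<longrightarrow> card ((nbrs E b \<inter> S) - {P b}) = 1) \<and>
         (P b \<in> S \<and> b \<in> S \<longrightarrow> card ((nbrs E b \<inter> S) - {P b}) = 0)"
        using H2 by blast
    qed
  qed
qed



end
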